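(* Let $R$ be a local ring and $s\in R$ a central element with $s\in J(R)$. For $A\in M_2(R;s)$, we have $A^n\in J\big(M_2(R;s)\big)$ for some positive integer $n$ if and only if $A\in J\big(M_2(R;s)\big)$.
   Context: All rings are associative with identity. A ring $R$ is local if $R/J(R)$ is a division ring, where $J(R)$ is the Jacobson radical. For a ring $R$ and a central element $s\in R$, $M_2(R;s)$ denotes the ring whose elements are the $2\times 2$ arrays $\left[\begin{smallmatrix} a&b\\ c&d\end{smallmatrix}\right]$ with $a,b,c,d\in R$, with componentwise addition and multiplication $\left[\begin{smallmatrix} a&b\\ c&d\end{smallmatrix}\right]\left[\begin{smallmatrix} a'&b'\\ c'&d'\end{smallmatrix}\right]=\left[\begin{smallmatrix} aa'+s^2bc'&ab'+bd'\\ ca'+dc'&s^2cb'+dd'\end{smallmatrix}\right]$. $J\big(M_2(R;s)\big)$ denotes the Jacobson radical of this ring. *)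

theory Defs
  imports "HOL-Algebra.Algebra"
begin

definition left_ideal :: "'a set \<Rightarrow> ('a, 'b) ring_scheme \<Rightarrow> bool" where
  "left_ideal I R \<longleftrightarrow> additive_subgroup I R \<and>
     (\<forall>r \<in> carrier R. \<forall>x \<in> I. r \<otimes>\<^bsub>R\<^esub> x \<in> I)"

definition maximal_left_ideal :: "'a set \<Rightarrow> ('a, 'b) ring_scheme \<Rightarrow> bool" where
  "maximal_left_ideal I R \<longleftrightarrow> left_ideal I R \<and> I \<noteq> carrier R \<and>
     (\<forall>K. left_ideal K R \<and> I \<subseteq> K \<longrightarrow> K = I \<or> K = carrier R)"

definition jacobson :: "('a, 'b) ring_scheme \<Rightarrow> 'a set" where
  "jacobson R = carrier R \<inter> \<Inter> {I. maximal_left_ideal I R}"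

definition division_ring :: "('a, 'b) ring_scheme \<Rightarrow> bool" where
  "division_ring R \<longleftrightarrow> ring R \<and> \<one>\<^bsub>R\<^esub> \<noteq> \<zero>\<^bsub>R\<^esub> \<and>
     (\<forall>x \<in> carrier R - {\<zero>\<^bsub>R\<^esub>}. x \<in> Units R)"

definition local_ring :: "('a, 'b) ring_scheme \<Rightarrow> bool" where
  "local_ring R \<longleftrightarrow> ring R \<and> division_ring (R Quot jacobson R)"

definition central :: "('a, 'b) ring_scheme \<Rightarrow> 'a \<Rightarrow> bool" where
  "central R s \<longleftrightarrow> s \<in> carrier R \<and> (\<forall>x \<in> carrier R. s \<otimes>\<^bsub>R\<^esub> x = x \<otimes>\<^bsub>R\<^esub> s)"

text \<open>The ring M_2(R;s); the array [a b; c d] is represented as (a,b,c,d).\<close>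
definition e11 :: "'a * 'a * 'a * 'a \<Rightarrow> 'a" where "e11 P = fst P"
definition e12 :: "'a * 'a * 'a * 'a \<Rightarrow> 'a" where "e12 P = fst (snd P)"
definition e21 :: "'a * 'a * 'a * 'a \<Rightarrow> 'a" where "e21 P = fst (snd (snd P))"
definition e22 :: "'a * 'a * 'a * 'a \<Rightarrow> 'a" where "e22 P = snd (snd (snd P))"

definition M2_mult :: "('a, 'b) ring_scheme \<Rightarrow> 'a \<Rightarrow> 'a * 'a * 'a * 'a \<Rightarrow> 'a * 'a * 'a * 'a \<Rightarrow> 'a * 'a * 'a * 'a" where
  "M2_mult R s P Q =
        (e11 P \<otimes>\<^bsub>R\<^esub> e11 Q \<oplus>\<^bsub>R\<^esub> (s [^]\<^bsub>R\<^esub> (2::nat)) \<otimes>\<^bsub>R\<^esub> e12 P \<otimes>\<^bsub>R\<^esub> e21 Q,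
         e11 P \<otimes>\<^bsub>R\<^esub> e12 Q \<oplus>\<^bsub>R\<^esub> e12 P \<otimes>\<^bsub>R\<^esub> e22 Q,
         e21 P \<otimes>\<^bsub>R\<^esub> e11 Q \<oplus>\<^bsub>R\<^esub> e22 P \<otimes>\<^bsub>R\<^esub> e21 Q,
         (s [^]\<^bsub>R\<^esub> (2::nat)) \<otimes>\<^bsub>R\<^esub> e21 P \<otimes>\<^bsub>R\<^esub> e12 Q \<oplus>\<^bsub>R\<^esub> e22 P \<otimes>\<^bsub>R\<^esub> e22 Q)"

definition M2_add :: "('a, 'b) ring_scheme \<Rightarrow> 'a * 'a * 'a * 'a \<Rightarrow> 'a * 'a * 'a * 'a \<Rightarrow> 'a * 'a * 'a * 'a" where
  "M2_add R P Q = (e11 P \<oplus>\<^bsub>R\<^esub> e11 Q, e12 P \<oplus>\<^bsub>R\<^esub> e12 Q,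
                   e21 P \<oplus>\<^bsub>R\<^esub> e21 Q, e22 P \<oplus>\<^bsub>R\<^esub> e22 Q)"

definition M2 :: "('a, 'b) ring_scheme \<Rightarrow> 'a \<Rightarrow> ('a * 'a * 'a * 'a) ring" where
  "M2 R s = \<lparr>carrier = carrier R \<times> carrier R \<times> carrier R \<times> carrier R,
     monoid.mult = M2_mult R s,
     one = (\<one>\<^bsub>R\<^esub>, \<zero>\<^bsub>R\<^esub>, \<zero>\<^bsub>R\<^esub>, \<one>\<^bsub>R\<^esub>),
     ring.zero = (\<zero>\<^bsub>R\<^esub>, \<zero>\<^bsub>R\<^esub>, \<zero>\<^bsub>R\<^esub>, \<zero>\<^bsub>R\<^esub>),
     ring.add = M2_add R\<rparr>"

end

theory Submission imports Defs begin

lemma e_simps[simp]: "e11 (a,b,c,d) = a" "e12 (a,b,c,d) = b" "e21 (a,b,c,d) = c" "e22 (a,b,c,d) = d"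
  by (simp_all add: e11_def e12_def e21_def e22_def)

lemma M2_simps[simp]:
  "carrier (M2 R s) = carrier R \<times> carrier R \<times> carrier R \<times> carrier R"
  "(a,b,c,d) \<otimes>\<^bsub>M2 R s\<^esub> (a',b',c',d') =
        (a \<otimes>\<^bsub>R\<^esub> a' \<oplus>\<^bsub>R\<^esub> (s [^]\<^bsub>R\<^esub> (2::nat)) \<otimes>\<^bsub>R\<^esub> b \<otimes>\<^bsub>R\<^esub> c',
         a \<otimes>\<^bsub>R\<^esub> b' \<oplus>\<^bsub>R\<^esub> b \<otimes>\<^bsub>R\<^esub> d',
         c \<otimes>\<^bsub>R\<^esub> a' \<oplus>\<^bsub>R\<^esub> d \<otimes>\<^bsub>R\<^esub> c',
         (s [^]\<^bsub>R\<^esub> (2::nat)) \<otimes>\<^bsub>R\<^esub> c \<otimes>\<^bsub>R\<^esub> b' \<oplus>\<^bsub>R\<^esub> d \<otimes>\<^bsub>R\<^esub> d')"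
  "\<one>\<^bsub>M2 R s\<^esub> = (\<one>\<^bsub>R\<^esub>, \<zero>\<^bsub>R\<^esub>, \<zero>\<^bsub>R\<^esub>, \<one>\<^bsub>R\<^esub>)"
  "\<zero>\<^bsub>M2 R s\<^esub> = (\<zero>\<^bsub>R\<^esub>, \<zero>\<^bsub>R\<^esub>, \<zero>\<^bsub>R\<^esub>, \<zero>\<^bsub>R\<^esub>)"
  "(a,b,c,d) \<oplus>\<^bsub>M2 R s\<^esub> (a',b',c',d') = (a \<oplus>\<^bsub>R\<^esub> a', b \<oplus>\<^bsub>R\<^esub> b', c \<oplus>\<^bsub>R\<^esub> c', d \<oplus>\<^bsub>R\<^esub> d')"
  by (simp_all add: M2_def M2_mult_def M2_add_def)

context ring begin

lemma left_idealI':
  assumes "I \<subseteq> carrier R" "\<zero> \<in> I" "\<And>x y. x \<in> I \<Longrightarrow> y \<in> I \<Longrightarrow> x \<oplus> y \<in> I"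
    "\<And>r x. r \<in> carrier R \<Longrightarrow> x \<in> I \<Longrightarrow> r \<otimes> x \<in> I"
  shows "left_ideal I R"
  unfolding left_ideal_def
proof (intro conjI ballI additive_subgroupI)
  show "subgroup I (add_monoid R)"
  proof (rule add.subgroupI)
    fix a assume a: "a \<in> I"
    have "a \<in> carrier R" using a assms(1) by auto
    hence "\<ominus> a = (\<ominus> \<one>) \<otimes> a" by (simp add: l_minus)
    thus "\<ominus> a \<in> I" using assms(4)[of "\<ominus> \<one>" a] a by simp
  qed (use assms in auto)
qed (use assms in auto)

end

lemma left_ideal_closed:
  assumes "left_ideal I R"
  shows "I \<subseteq> carrier R" "\<zero>\<^bsub>R\<^esub> \<in> I" "x \<in> I \<Longrightarrow> y \<in> I \<Longrightarrow> x \<oplus>\<^bsub>R\<^esub> y \<in> I"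
    "x \<in> I \<Longrightarrow> \<ominus>\<^bsub>R\<^esub> x \<in> I" "r \<in> carrier R \<Longrightarrow> x \<in> I \<Longrightarrow> r \<otimes>\<^bsub>R\<^esub> x \<in> I"
  using assms unfolding left_ideal_def
  by (auto intro: additive_subgroup.a_closed additive_subgroup.a_inv_closed additive_subgroup.zero_closed
     dest: additive_subgroup.a_subset)

lemma (in ring) left_ideal_one:
  assumes "left_ideal I R" "\<one> \<in> I" shows "I = carrier R"
proof
  show "I \<subseteq> carrier R" using left_ideal_closed(1)[OF assms(1)] .
  show "carrier R \<subseteq> I"
  proof
    fix x assume "x \<in> carrier R"
    hence "x = x \<otimes> \<one>" by simp
    thus "x \<in> I" using left_ideal_closed(5)[OF assms(1) \<open>x \<in> carrier R\<close> assms(2)] by simp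
  qed
qed


locale m2 = ring R for R (structure) + fixes s assumes cent: "central R s"
begin

lemma s_closed: "s \<in> carrier R" using cent by (simp add: central_def)

lemma t_closed[simp]: "s [^] (2::nat) \<in> carrier R" using s_closed by simp

lemma t_comm: "x \<in> carrier R \<Longrightarrow> s [^] (2::nat) \<otimes> x = x \<otimes> s [^] (2::nat)"
proof -
  assume x: "x \<in> carrier R"
  have sx: "s \<otimes> x = x \<otimes> s" using cent x by (simp add: central_def)
  have "s [^] (2::nat) = s \<otimes> s" using s_closed by (simp add: numeral_2_eq_2)
  hence "s [^] (2::nat) \<otimes> x = s \<otimes> (s \<otimes> x)" using x s_closed by (simp add: m_assoc)
  also have "\<dots> = s \<otimes> (x \<otimes> s)" using sx by simp
  also have "\<dots> = (s \<otimes> x) \<otimes> s" using x s_closed by (simp add: m_assoc)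
  also have "\<dots> = x \<otimes> (s \<otimes> s)" using x s_closed sx by (simp add: m_assoc)
  finally show ?thesis using \<open>s [^] (2::nat) = s \<otimes> s\<close> by simp
qed

lemma t_left: "x \<in> carrier R \<Longrightarrow> y \<in> carrier R \<Longrightarrow> x \<otimes> (s [^] (2::nat) \<otimes> y) = s [^] (2::nat) \<otimes> (x \<otimes> y)"
  by (metis m_assoc t_closed t_comm)

lemmas nf = m_assoc l_distr r_distr t_left

abbreviation "M \<equiv> M2 R s"

lemma M2_abelian: "abelian_group M"
proof (rule abelian_groupI)
  fix x assume "x \<in> carrier M"
  then obtain a b c d where "x = (a,b,c,d)" "a \<in> carrier R" "b \<in> carrier R" "c \<in> carrier R" "d \<in> carrier R"
    by auto
  thus "\<exists>y\<in>carrier M. y \<oplus>\<^bsub>M\<^esub> x = \<zero>\<^bsub>M\<^esub>"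
    by (intro bexI[of _ "(\<ominus>a, \<ominus>b, \<ominus>c, \<ominus>d)"]) (auto simp: l_neg)
qed (auto simp: a_ac)

lemma M2_monoid: "monoid M"
proof (rule monoidI)
  fix x y z assume "x \<in> carrier M" "y \<in> carrier M" "z \<in> carrier M"
  thus "x \<otimes>\<^bsub>M\<^esub> y \<otimes>\<^bsub>M\<^esub> z = x \<otimes>\<^bsub>M\<^esub> (y \<otimes>\<^bsub>M\<^esub> z)"
    by (auto simp: nf a_ac)
qed auto

lemma M2_ring: "ring M"
  by (rule ringI[OF M2_abelian M2_monoid]) (auto simp: nf a_ac)

end


context ring begin

lemma exists_max:
  assumes z: "z \<in> carrier R" and nz: "\<forall>y\<in>carrier R. y \<otimes> z \<noteq> \<one>"
  shows "\<exists>I. maximal_left_ideal I R \<and> z \<in> I"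
proof -
  define A where "A = {L. left_ideal L R \<and> z \<in> L \<and> \<one> \<notin> L}"
  define Rz where "Rz = {r \<otimes> z | r. r \<in> carrier R}"
  have Rz: "Rz \<in> A"
    unfolding A_def
  proof (intro CollectI conjI)
    show "left_ideal Rz R"
    proof (rule left_idealI')
      show "Rz \<subseteq> carrier R" using z by (auto simp: Rz_def)
      show "\<zero> \<in> Rz" unfolding Rz_def using z by (intro CollectI exI[of _ \<zero>]) simp
      fix x y assume "x \<in> Rz" "y \<in> Rz"
      then obtain r1 r2 where "x = r1 \<otimes> z" "y = r2 \<otimes> z" "r1 \<in> carrier R" "r2 \<in> carrier R"
        by (auto simp: Rz_def)
      thus "x \<oplus> y \<in> Rz" unfolding Rz_def using z
        by (intro CollectI exI[of _ "r1 \<oplus> r2"]) (simp add: l_distr)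
    next
      fix r x assume "r \<in> carrier R" "x \<in> Rz"
      then obtain r1 where "x = r1 \<otimes> z" "r1 \<in> carrier R" by (auto simp: Rz_def)
      thus "r \<otimes> x \<in> Rz" unfolding Rz_def using z \<open>r \<in> carrier R\<close>
        by (intro CollectI exI[of _ "r \<otimes> r1"]) (simp add: m_assoc)
    qed
    show "z \<in> Rz" unfolding Rz_def using z by (intro CollectI exI[of _ \<one>]) simp
    show "\<one> \<notin> Rz" using nz by (auto simp: Rz_def)
  qed
  have "\<forall>C\<in>chains A. \<exists>U\<in>A. \<forall>Y\<in>C. Y \<subseteq> U"
  proof
    fix C assume C: "C \<in> chains A"
    show "\<exists>U\<in>A. \<forall>Y\<in>C. Y \<subseteq> U"
    proof (cases "C = {}")
      case True then show ?thesis using Rz by blast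
    next
      case False
      then obtain X0 where X0: "X0 \<in> C" by blast
      have CA: "C \<subseteq> A" and ch: "\<forall>P1\<in>C. \<forall>Y\<in>C. P1 \<subseteq> Y \<or> Y \<subseteq> P1"
        using C by (auto simp: chains_def chain_subset_def)
      have li: "\<And>P1. P1 \<in> C \<Longrightarrow> left_ideal P1 R" using CA by (auto simp: A_def)
      have "\<Union>C \<in> A" unfolding A_def
      proof (intro CollectI conjI)
        show "left_ideal (\<Union>C) R"
        proof (rule left_idealI')
          show "\<Union>C \<subseteq> carrier R" using left_ideal_closed(1)[OF li] by blast
          show "\<zero> \<in> \<Union>C" using left_ideal_closed(2)[OF li[OF X0]] X0 by blast
          fix x y assume "x \<in> \<Union>C" "y \<in> \<Union>C"
          then obtain P1 Y where XY: "P1 \<in> C" "Y \<in> C" "x \<in> P1" "y \<in> Y" by blast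
          show "x \<oplus> y \<in> \<Union>C"
          proof (cases "P1 \<subseteq> Y")
            case True
            then show ?thesis using left_ideal_closed(3)[OF li[OF XY(2)], of x y] XY by blast
          next
            case False
            hence "Y \<subseteq> P1" using ch XY by blast
            then show ?thesis using left_ideal_closed(3)[OF li[OF XY(1)], of x y] XY by blast
          qed
        next
          fix r x assume "r \<in> carrier R" "x \<in> \<Union>C"
          then show "r \<otimes> x \<in> \<Union>C" using left_ideal_closed(5)[OF li] by blast
        qed
        show "z \<in> \<Union>C" using X0 CA by (auto simp: A_def)
        show "\<one> \<notin> \<Union>C" using CA by (auto simp: A_def)
      qed
      then show ?thesis by blast
    qed
  qed
  then obtain Mx where Mx: "Mx \<in> A" "\<forall>P1\<in>A. Mx \<subseteq> P1 \<longrightarrow> P1 = Mx" using Zorn_Lemma2 by blast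
  have "maximal_left_ideal Mx R"
    unfolding maximal_left_ideal_def
  proof (intro conjI allI impI)
    show "left_ideal Mx R" using Mx by (auto simp: A_def)
    show "Mx \<noteq> carrier R" using Mx by (auto simp: A_def)
    fix K assume K: "left_ideal K R \<and> Mx \<subseteq> K"
    show "K = Mx \<or> K = carrier R"
    proof (cases "\<one> \<in> K")
      case True then show ?thesis using left_ideal_one K by blast
    next
      case False
      hence "K \<in> A" using K Mx by (auto simp: A_def)
      then show ?thesis using Mx K by blast
    qed
  qed
  thus ?thesis using Mx by (auto simp: A_def)
qed

lemma jac_sub: "maximal_left_ideal I R \<Longrightarrow> jacobson R \<subseteq> I"
  by (auto simp: jacobson_def)

lemma jac_left_ideal: "left_ideal (jacobson R) R"
proof (rule left_idealI')
  have li: "\<And>I. maximal_left_ideal I R \<Longrightarrow> left_ideal I R" by (simp add: maximal_left_ideal_def)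
  show "jacobson R \<subseteq> carrier R" by (auto simp: jacobson_def)
  show "\<zero> \<in> jacobson R" using left_ideal_closed(2)[OF li] by (auto simp: jacobson_def)
  show "\<And>x y. x \<in> jacobson R \<Longrightarrow> y \<in> jacobson R \<Longrightarrow> x \<oplus> y \<in> jacobson R"
    using left_ideal_closed(3)[OF li] by (auto simp: jacobson_def)
  show "\<And>r x. r \<in> carrier R \<Longrightarrow> x \<in> jacobson R \<Longrightarrow> r \<otimes> x \<in> jacobson R"
    using left_ideal_closed(5)[OF li] by (auto simp: jacobson_def)
qed

lemma one_plus_jac:
  assumes h: "h \<in> jacobson R" shows "\<exists>w\<in>carrier R. w \<otimes> (h \<oplus> \<one>) = \<one>"
proof (rule ccontr)
  assume nt: "\<not> ?thesis"
  have hc: "h \<in> carrier R" using h by (auto simp: jacobson_def)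
  then obtain I where I: "maximal_left_ideal I R" "h \<oplus> \<one> \<in> I"
    using exists_max[of "h \<oplus> \<one>"] nt by auto
  have li: "left_ideal I R" using I by (simp add: maximal_left_ideal_def)
  have "h \<in> I" using jac_sub[OF I(1)] h by blast
  hence "\<ominus> h \<oplus> (h \<oplus> \<one>) \<in> I" using left_ideal_closed(3,4)[OF li] I by blast
  moreover have "\<ominus> h \<oplus> (h \<oplus> \<one>) = \<one>" using hc by (simp add: a_assoc[symmetric] l_neg)
  ultimately have "I = carrier R" using left_ideal_one[OF li] by simp
  thus False using I by (simp add: maximal_left_ideal_def)
qed

end

locale lr = m2 + assumes loc: "local_ring R" and sJ: "s \<in> jacobson R"
begin

abbreviation "J \<equiv> jacobson R"

lemma J_carrier: "x \<in> J \<Longrightarrow> x \<in> carrier R" by (auto simp: jacobson_def)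

lemma one_notin_J: "\<one> \<notin> J"
proof
  assume "\<one> \<in> J"
  hence JC: "J = carrier R" using left_ideal_one jac_left_ideal by blast
  have dr: "\<one>\<^bsub>R Quot J\<^esub> \<noteq> \<zero>\<^bsub>R Quot J\<^esub>" using loc by (simp add: local_ring_def division_ring_def)
  have "J +> \<one> = J"
  proof
    show "J +> \<one> \<subseteq> J" using JC by (auto simp: a_r_coset_def')
    show "J \<subseteq> J +> \<one>"
    proof
      fix c assume "c \<in> J"
      hence c: "c \<in> carrier R" using JC by simp
      have "c = (c \<oplus> \<ominus> \<one>) \<oplus> \<one>" using c by (simp add: a_assoc l_neg)
      thus "c \<in> J +> \<one>" using c JC unfolding a_r_coset_def' by blast
    qed
  qed
  thus False using dr by (simp add: FactRing_def)
qed


lemma J_left: "r \<in> carrier R \<Longrightarrow> x \<in> J \<Longrightarrow> r \<otimes> x \<in> J"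
  using left_ideal_closed(5)[OF jac_left_ideal] by blast
lemma J_add: "x \<in> J \<Longrightarrow> y \<in> J \<Longrightarrow> x \<oplus> y \<in> J"
  using left_ideal_closed(3)[OF jac_left_ideal] by blast
lemma J_neg: "x \<in> J \<Longrightarrow> \<ominus> x \<in> J"
  using left_ideal_closed(4)[OF jac_left_ideal] by blast
lemma J_zero: "\<zero> \<in> J"
  using left_ideal_closed(2)[OF jac_left_ideal] by blast

lemma t_J: "x \<in> carrier R \<Longrightarrow> s [^] (2::nat) \<otimes> x \<in> J"
proof -
  assume x: "x \<in> carrier R"
  have "s [^] (2::nat) = s \<otimes> s" using s_closed by (simp add: numeral_2_eq_2)
  hence "s [^] (2::nat) \<in> J" using J_left[OF s_closed sJ] by simp
  thus ?thesis using t_comm[OF x] J_left[OF x] by simp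
qed

lemma add_J_iff: "u \<in> carrier R \<Longrightarrow> j \<in> J \<Longrightarrow> (u \<oplus> j \<in> J \<longleftrightarrow> u \<in> J)"
proof
  assume u: "u \<in> carrier R" and j: "j \<in> J" and uj: "u \<oplus> j \<in> J"
  have jc: "j \<in> carrier R" using J_carrier j .
  have "u = (u \<oplus> j) \<oplus> \<ominus> j" using u jc by (simp add: a_assoc r_neg)
  thus "u \<in> J" using J_add[OF uj J_neg[OF j]] by simp
qed (simp add: J_add)

lemma nonJ_inv:
  assumes x: "x \<in> carrier R" and xJ: "x \<notin> J"
  shows "\<exists>y\<in>carrier R. y \<otimes> x = \<one>"
proof -
  have dr: "division_ring (R Quot J)" using loc by (simp add: local_ring_def)
  have X: "J +> x \<in> carrier (R Quot J)" using x by (auto simp: FactRing_def A_RCOSETS_def')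
  have "J +> x \<noteq> J"
  proof
    assume "J +> x = J"
    moreover have "x \<in> J +> x" using x J_zero unfolding a_r_coset_def' by (intro UN_I[of \<zero>]) auto
    ultimately show False using xJ by simp
  qed
  hence "J +> x \<in> carrier (R Quot J) - {\<zero>\<^bsub>R Quot J\<^esub>}" using X by (simp add: FactRing_def)
  hence "J +> x \<in> Units (R Quot J)" using dr by (simp add: division_ring_def)
  then obtain Y where Y: "Y \<in> carrier (R Quot J)" "Y \<otimes>\<^bsub>R Quot J\<^esub> (J +> x) = \<one>\<^bsub>R Quot J\<^esub>"
    by (auto simp: Units_def)
  then obtain y where y: "y \<in> carrier R" "Y = J +> y" by (auto simp: FactRing_def A_RCOSETS_def')
  have yY: "y \<in> Y" using y J_zero unfolding a_r_coset_def' by (auto intro!: UN_I[of \<zero>])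
  have xX: "x \<in> J +> x" using x J_zero unfolding a_r_coset_def' by (intro UN_I[of \<zero>]) auto
  have "y \<otimes> x \<in> J +> (y \<otimes> x)" using x y J_zero unfolding a_r_coset_def' by (intro UN_I[of \<zero>]) auto
  hence "y \<otimes> x \<in> Y \<otimes>\<^bsub>R Quot J\<^esub> (J +> x)"
    using yY xX by (auto simp: FactRing_def rcoset_mult_def)
  hence "y \<otimes> x \<in> J +> \<one>" using Y by (simp add: FactRing_def)
  then obtain h where h: "h \<in> J" "y \<otimes> x = h \<oplus> \<one>" unfolding a_r_coset_def' by auto
  obtain w where w: "w \<in> carrier R" "w \<otimes> (h \<oplus> \<one>) = \<one>" using one_plus_jac[OF h(1)] by blast
  have "(w \<otimes> y) \<otimes> x = \<one>" using w h x y by (simp add: m_assoc)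
  thus ?thesis using w y by blast
qed

lemma prod_notJ: "x \<in> carrier R \<Longrightarrow> y \<in> carrier R \<Longrightarrow> x \<notin> J \<Longrightarrow> y \<notin> J \<Longrightarrow> x \<otimes> y \<notin> J"
proof
  assume x: "x \<in> carrier R" and y: "y \<in> carrier R" and "x \<notin> J" "y \<notin> J" "x \<otimes> y \<in> J"
  obtain x' where "x' \<in> carrier R" "x' \<otimes> x = \<one>" using nonJ_inv x \<open>x \<notin> J\<close> by blast
  hence "x' \<otimes> (x \<otimes> y) = y" using x y by (simp add: m_assoc[symmetric])
  thus False using J_left[OF \<open>x' \<in> carrier R\<close> \<open>x \<otimes> y \<in> J\<close>] \<open>y \<notin> J\<close> by simp
qed


lemma tJ3: "q \<in> carrier R \<Longrightarrow> c \<in> carrier R \<Longrightarrow> s [^] (2::nat) \<otimes> q \<otimes> c \<in> J"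
  using t_J[of "q \<otimes> c"] by (simp add: m_assoc)

lemma e11_mult: assumes "r \<in> carrier M" "x \<in> carrier M" "e11 x \<in> J" shows "e11 (r \<otimes>\<^bsub>M\<^esub> x) \<in> J"
proof -
  obtain a b c d where xx: "x = (a,b,c,d)" by (cases x rule: prod_cases4)
  obtain p q r1 r2 where rr: "r = (p,q,r1,r2)" by (cases r rule: prod_cases4)
  have "p \<otimes> a \<oplus> s [^] (2::nat) \<otimes> q \<otimes> c \<in> J"
    using assms xx rr by (intro J_add J_left tJ3) auto
  thus ?thesis using xx rr by simp
qed

lemma e22_mult: assumes "r \<in> carrier M" "x \<in> carrier M" "e22 x \<in> J" shows "e22 (r \<otimes>\<^bsub>M\<^esub> x) \<in> J"
proof -
  obtain a b c d where xx: "x = (a,b,c,d)" by (cases x rule: prod_cases4)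
  obtain p q r1 r2 where rr: "r = (p,q,r1,r2)" by (cases r rule: prod_cases4)
  have "s [^] (2::nat) \<otimes> r1 \<otimes> b \<oplus> r2 \<otimes> d \<in> J"
    using assms xx rr by (intro J_add J_left tJ3) auto
  thus ?thesis using xx rr by simp
qed

lemma M_closed: "r \<in> carrier M \<Longrightarrow> x \<in> carrier M \<Longrightarrow> r \<otimes>\<^bsub>M\<^esub> x \<in> carrier M"
  using monoid.m_closed[OF M2_monoid] by blast

lemma M2_neg: "a \<in> carrier R \<Longrightarrow> b \<in> carrier R \<Longrightarrow> c \<in> carrier R \<Longrightarrow> d \<in> carrier R \<Longrightarrow>
   \<ominus>\<^bsub>M\<^esub> (a,b,c,d) = (\<ominus>a,\<ominus>b,\<ominus>c,\<ominus>d)"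
proof -
  interpret MR: ring M by (rule M2_ring)
  assume "a \<in> carrier R" "b \<in> carrier R" "c \<in> carrier R" "d \<in> carrier R"
  thus ?thesis by (intro MR.minus_equality) (auto simp: l_neg)
qed

lemma max1: "maximal_left_ideal {A \<in> carrier M. e11 A \<in> J} M"
proof -
  interpret MR: ring M by (rule M2_ring)
  let ?I = "{A \<in> carrier M. e11 A \<in> J}"
  have li: "left_ideal ?I M"
  proof (rule MR.left_idealI')
    show "?I \<subseteq> carrier M" by auto
    show "\<zero>\<^bsub>M\<^esub> \<in> ?I" using J_zero by simp
    fix x y assume "x \<in> ?I" "y \<in> ?I" thus "x \<oplus>\<^bsub>M\<^esub> y \<in> ?I"
      by (cases x rule: prod_cases4, cases y rule: prod_cases4) (auto simp: J_add)
  next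
    fix r x assume "r \<in> carrier M" "x \<in> ?I" thus "r \<otimes>\<^bsub>M\<^esub> x \<in> ?I"
      using e11_mult e22_mult M_closed by blast
  qed
  show ?thesis unfolding maximal_left_ideal_def
  proof (intro conjI allI impI li)
    show "?I \<noteq> carrier M"
    proof
      assume eq: "?I = carrier M"
      have "\<one>\<^bsub>M\<^esub> \<in> ?I" by (subst eq) (rule MR.one_closed)
      thus False using one_notin_J by simp
    qed
    fix K assume K: "left_ideal K M \<and> ?I \<subseteq> K"
    show "K = ?I \<or> K = carrier M"
    proof (cases "K = ?I")
      case True then show ?thesis by blast
    next
      case False
      then obtain Z where Z: "Z \<in> K" "Z \<notin> ?I" using K by blast
      have Kc: "K \<subseteq> carrier M" using left_ideal_closed(1) K by blast
      obtain x1 x2 x3 x4 where Zx: "Z = (x1,x2,x3,x4)" by (cases Z rule: prod_cases4)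
      have xc: "x1 \<in> carrier R" "x2 \<in> carrier R" "x3 \<in> carrier R" "x4 \<in> carrier R" using Z Kc Zx by auto
      have x1J: "x1 \<notin> J" using Z Kc Zx by auto
      obtain y where y: "y \<in> carrier R" "y \<otimes> x1 = \<one>" using nonJ_inv xc x1J by blast
      have "(y,\<zero>,\<zero>,\<zero>) \<otimes>\<^bsub>M\<^esub> Z \<in> K" by (rule left_ideal_closed(5)[of K M]) (use K Z y in auto)
      hence E: "(\<one>, y \<otimes> x2, \<zero>, \<zero>) \<in> K" using y xc Zx by simp
      have "(\<zero>, \<ominus> (y \<otimes> x2), \<zero>, \<zero>) \<in> K" proof - have "(\<zero>, \<ominus> (y \<otimes> x2), \<zero>, \<zero>) \<in> ?I" using J_zero y xc by simp thus ?thesis using K by blast qed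
      from left_ideal_closed(3)[of K M, OF _ E this] K
      have E1: "(\<one>, \<zero>, \<zero>, \<zero>) \<in> K" using y xc by (simp add: r_neg)
      have "K = carrier M"
      proof
        show "carrier M \<subseteq> K"
        proof
          fix W assume W: "W \<in> carrier M"
          obtain z1 z2 z3 z4 where Wz: "W = (z1,z2,z3,z4)" by (cases W rule: prod_cases4)
          have zc: "z1 \<in> carrier R" "z2 \<in> carrier R" "z3 \<in> carrier R" "z4 \<in> carrier R" using W Wz by auto
          have "W \<otimes>\<^bsub>M\<^esub> (\<one>, \<zero>, \<zero>, \<zero>) \<in> K" by (rule left_ideal_closed(5)[of K M]) (use K W E1 in auto)
          hence A1: "(z1, \<zero>, z3, \<zero>) \<in> K" using Wz zc by simp
          have A2: "(\<zero>, z2, \<zero>, z4) \<in> K" proof - have "(\<zero>, z2, \<zero>, z4) \<in> ?I" using J_zero zc by simp thus ?thesis using K by blast qed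
          from left_ideal_closed(3)[of K M, OF _ A1 A2] K show "W \<in> K" using Wz zc by simp
        qed
      qed (use Kc in auto)
      thus ?thesis by blast
    qed
  qed
qed

lemma max2: "maximal_left_ideal {A \<in> carrier M. e22 A \<in> J} M"
proof -
  interpret MR: ring M by (rule M2_ring)
  let ?I = "{A \<in> carrier M. e22 A \<in> J}"
  have li: "left_ideal ?I M"
  proof (rule MR.left_idealI')
    show "?I \<subseteq> carrier M" by auto
    show "\<zero>\<^bsub>M\<^esub> \<in> ?I" using J_zero by simp
    fix x y assume "x \<in> ?I" "y \<in> ?I" thus "x \<oplus>\<^bsub>M\<^esub> y \<in> ?I"
      by (cases x rule: prod_cases4, cases y rule: prod_cases4) (auto simp: J_add)
  next
    fix r x assume "r \<in> carrier M" "x \<in> ?I" thus "r \<otimes>\<^bsub>M\<^esub> x \<in> ?I"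
      using e11_mult e22_mult M_closed by blast
  qed
  show ?thesis unfolding maximal_left_ideal_def
  proof (intro conjI allI impI li)
    show "?I \<noteq> carrier M"
    proof
      assume eq: "?I = carrier M"
      have "\<one>\<^bsub>M\<^esub> \<in> ?I" by (subst eq) (rule MR.one_closed)
      thus False using one_notin_J by simp
    qed
    fix K assume K: "left_ideal K M \<and> ?I \<subseteq> K"
    show "K = ?I \<or> K = carrier M"
    proof (cases "K = ?I")
      case True then show ?thesis by blast
    next
      case False
      then obtain Z where Z: "Z \<in> K" "Z \<notin> ?I" using K by blast
      have Kc: "K \<subseteq> carrier M" using left_ideal_closed(1) K by blast
      obtain x1 x2 x3 x4 where Zx: "Z = (x1,x2,x3,x4)" by (cases Z rule: prod_cases4)
      have xc: "x1 \<in> carrier R" "x2 \<in> carrier R" "x3 \<in> carrier R" "x4 \<in> carrier R" using Z Kc Zx by auto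
      have x4J: "x4 \<notin> J" using Z Kc Zx by auto
      obtain y where y: "y \<in> carrier R" "y \<otimes> x4 = \<one>" using nonJ_inv xc x4J by blast
      have "(\<zero>,\<zero>,\<zero>,y) \<otimes>\<^bsub>M\<^esub> Z \<in> K" by (rule left_ideal_closed(5)[of K M]) (use K Z y in auto)
      hence E: "(\<zero>, \<zero>, y \<otimes> x3, \<one>) \<in> K" using y xc Zx by simp
      have "(\<zero>, \<zero>, \<ominus> (y \<otimes> x3), \<zero>) \<in> K" proof - have "(\<zero>, \<zero>, \<ominus> (y \<otimes> x3), \<zero>) \<in> ?I" using J_zero y xc by simp thus ?thesis using K by blast qed
      from left_ideal_closed(3)[of K M, OF _ E this] K
      have E1: "(\<zero>, \<zero>, \<zero>, \<one>) \<in> K" using y xc by (simp add: r_neg)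
      have "K = carrier M"
      proof
        show "carrier M \<subseteq> K"
        proof
          fix W assume W: "W \<in> carrier M"
          obtain z1 z2 z3 z4 where Wz: "W = (z1,z2,z3,z4)" by (cases W rule: prod_cases4)
          have zc: "z1 \<in> carrier R" "z2 \<in> carrier R" "z3 \<in> carrier R" "z4 \<in> carrier R" using W Wz by auto
          have "W \<otimes>\<^bsub>M\<^esub> (\<zero>, \<zero>, \<zero>, \<one>) \<in> K" by (rule left_ideal_closed(5)[of K M]) (use K W E1 in auto)
          hence A1: "(\<zero>, z2, \<zero>, z4) \<in> K" using Wz zc by simp
          have A2: "(z1, \<zero>, z3, \<zero>) \<in> K" proof - have "(z1, \<zero>, z3, \<zero>) \<in> ?I" using J_zero zc by simp thus ?thesis using K by blast qed
          from left_ideal_closed(3)[of K M, OF _ A2 A1] K show "W \<in> K" using Wz zc by simp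
        qed
      qed (use Kc in auto)
      thus ?thesis by blast
    qed
  qed
qed


lemma Q_left: "r \<in> carrier M \<Longrightarrow> q \<in> carrier M \<Longrightarrow> e11 q \<in> J \<Longrightarrow> e22 q \<in> J \<Longrightarrow>
   r \<otimes>\<^bsub>M\<^esub> q \<in> carrier M \<and> e11 (r \<otimes>\<^bsub>M\<^esub> q) \<in> J \<and> e22 (r \<otimes>\<^bsub>M\<^esub> q) \<in> J"
  using e11_mult e22_mult M_closed by blast

lemma key:
  assumes I: "maximal_left_ideal I M" and X: "(u,\<beta>,\<gamma>,v) \<in> I"
    and c: "u \<in> carrier R" "\<beta> \<in> carrier R" "\<gamma> \<in> carrier R" "v \<in> carrier R"
    and uJ: "u \<notin> J" and vJ: "v \<notin> J"
  shows False
proof -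
  interpret MR: ring M by (rule M2_ring)
  have li: "left_ideal I M" using I by (simp add: maximal_left_ideal_def)
  note lm = left_ideal_closed(5)[OF li] and la = left_ideal_closed(3)[OF li] and ln = left_ideal_closed(4)[OF li]
  obtain u' where u': "u' \<in> carrier R" "u' \<otimes> u = \<one>" using nonJ_inv c uJ by blast
  obtain v' where v': "v' \<in> carrier R" "v' \<otimes> v = \<one>" using nonJ_inv c vJ by blast
  define b where "b = u' \<otimes> \<beta>"
  define cc where "cc = v' \<otimes> \<gamma>"
  have bc: "b \<in> carrier R" "cc \<in> carrier R" using u' v' c by (auto simp: b_def cc_def)
  have "(u',\<zero>,\<zero>,\<zero>) \<otimes>\<^bsub>M\<^esub> (u,\<beta>,\<gamma>,v) \<in> I" by (rule lm) (use X u' in auto)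
  hence E: "(\<one>, b, \<zero>, \<zero>) \<in> I" using u' c by (simp add: b_def)
  have "(\<zero>,\<zero>,\<zero>,v') \<otimes>\<^bsub>M\<^esub> (u,\<beta>,\<gamma>,v) \<in> I" by (rule lm) (use X v' in auto)
  hence F: "(\<zero>, \<zero>, cc, \<one>) \<in> I" using v' c by (simp add: cc_def)
  have "(\<zero>,b,\<zero>,\<zero>) \<otimes>\<^bsub>M\<^esub> (\<zero>, \<zero>, cc, \<one>) \<in> I" by (rule lm) (use F bc in auto)
  hence G: "(s [^] (2::nat) \<otimes> b \<otimes> cc, b, \<zero>, \<zero>) \<in> I" using bc by simp
  have "\<ominus>\<^bsub>M\<^esub> (s [^] (2::nat) \<otimes> b \<otimes> cc, b, \<zero>, \<zero>) \<in> I" using ln G by blast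
  hence "(\<ominus> (s [^] (2::nat) \<otimes> b \<otimes> cc), \<ominus> b, \<zero>, \<zero>) \<in> I" using bc by (simp add: M2_neg)
  from la[OF E this] have E2: "(\<one> \<oplus> \<ominus> (s [^] (2::nat) \<otimes> b \<otimes> cc), \<zero>, \<zero>, \<zero>) \<in> I"
    using bc by (simp add: r_neg)
  have "(\<zero>,\<zero>,cc,\<zero>) \<otimes>\<^bsub>M\<^esub> (\<one>, b, \<zero>, \<zero>) \<in> I" by (rule lm) (use E bc in auto)
  hence H: "(\<zero>, \<zero>, cc, s [^] (2::nat) \<otimes> cc \<otimes> b) \<in> I" using bc by simp
  have "\<ominus>\<^bsub>M\<^esub> (\<zero>, \<zero>, cc, s [^] (2::nat) \<otimes> cc \<otimes> b) \<in> I" using ln H by blast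
  hence "(\<zero>, \<zero>, \<ominus> cc, \<ominus> (s [^] (2::nat) \<otimes> cc \<otimes> b)) \<in> I" using bc by (simp add: M2_neg)
  from la[OF F this] have F2: "(\<zero>, \<zero>, \<zero>, \<one> \<oplus> \<ominus> (s [^] (2::nat) \<otimes> cc \<otimes> b)) \<in> I"
    using bc by (simp add: r_neg)
  define w where "w = \<one> \<oplus> \<ominus> (s [^] (2::nat) \<otimes> b \<otimes> cc)"
  define z where "z = \<one> \<oplus> \<ominus> (s [^] (2::nat) \<otimes> cc \<otimes> b)"
  have wc: "w \<in> carrier R" "z \<in> carrier R" using bc by (auto simp: w_def z_def)
  have j1: "\<ominus> (s [^] (2::nat) \<otimes> b \<otimes> cc) \<in> J" using bc by (intro J_neg tJ3)
  have j2: "\<ominus> (s [^] (2::nat) \<otimes> cc \<otimes> b) \<in> J" using bc by (intro J_neg tJ3)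
  have "w \<notin> J" using add_J_iff[OF one_closed j1] one_notin_J by (simp add: w_def)
  then obtain w' where w': "w' \<in> carrier R" "w' \<otimes> w = \<one>" using nonJ_inv wc by blast
  have "z \<notin> J" using add_J_iff[OF one_closed j2] one_notin_J by (simp add: z_def)
  then obtain z' where z': "z' \<in> carrier R" "z' \<otimes> z = \<one>" using nonJ_inv wc by blast
  have "(w',\<zero>,\<zero>,\<zero>) \<otimes>\<^bsub>M\<^esub> (w, \<zero>, \<zero>, \<zero>) \<in> I" by (rule lm) (use E2 w' in \<open>auto simp: w_def\<close>)
  hence O1: "(\<one>, \<zero>, \<zero>, \<zero>) \<in> I" using w' wc by simp
  have "(\<zero>,\<zero>,\<zero>,z') \<otimes>\<^bsub>M\<^esub> (\<zero>, \<zero>, \<zero>, z) \<in> I" by (rule lm) (use F2 z' in \<open>auto simp: z_def\<close>)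
  hence O2: "(\<zero>, \<zero>, \<zero>, \<one>) \<in> I" using z' wc by simp
  have "\<one>\<^bsub>M\<^esub> \<in> I" using la[OF O1 O2] by simp
  hence "I = carrier M" using MR.left_ideal_one[OF li] by simp
  thus False using I by (simp add: maximal_left_ideal_def)
qed


lemma Q_sub:
  assumes I: "maximal_left_ideal I M" and A: "A \<in> carrier M" "e11 A \<in> J" "e22 A \<in> J"
  shows "A \<in> I"
proof (rule ccontr)
  assume AI: "A \<notin> I"
  interpret MR: ring M by (rule M2_ring)
  have li: "left_ideal I M" using I by (simp add: maximal_left_ideal_def)
  have Ic: "I \<subseteq> carrier M" using left_ideal_closed(1)[OF li] .
  define Q where "Q = {q \<in> carrier M. e11 q \<in> J \<and> e22 q \<in> J}"
  define K where "K = {x \<oplus>\<^bsub>M\<^esub> q | x q. x \<in> I \<and> q \<in> Q}"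
  have Q0: "\<zero>\<^bsub>M\<^esub> \<in> Q" using J_zero by (simp add: Q_def)
  have Qadd: "\<And>p q. p \<in> Q \<Longrightarrow> q \<in> Q \<Longrightarrow> p \<oplus>\<^bsub>M\<^esub> q \<in> Q"
    unfolding Q_def by (case_tac p rule: prod_cases4, case_tac q rule: prod_cases4) (auto simp: J_add)
  have Qc: "Q \<subseteq> carrier M" by (auto simp: Q_def)
  have liK: "left_ideal K M"
  proof (rule MR.left_idealI')
    show "K \<subseteq> carrier M" using Ic Qc by (auto simp: K_def)
    show "\<zero>\<^bsub>M\<^esub> \<in> K" unfolding K_def
      using left_ideal_closed(2)[OF li] Q0 by (intro CollectI exI[of _ "\<zero>\<^bsub>M\<^esub>"]) simp
    fix x y assume "x \<in> K" "y \<in> K"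
    then obtain x1 q1 x2 q2 where xy: "x = x1 \<oplus>\<^bsub>M\<^esub> q1" "y = x2 \<oplus>\<^bsub>M\<^esub> q2"
      "x1 \<in> I" "x2 \<in> I" "q1 \<in> Q" "q2 \<in> Q" by (auto simp: K_def)
    have "x1 \<in> carrier M" "x2 \<in> carrier M" "q1 \<in> carrier M" "q2 \<in> carrier M" using xy Ic Qc by auto
    hence "x \<oplus>\<^bsub>M\<^esub> y = (x1 \<oplus>\<^bsub>M\<^esub> x2) \<oplus>\<^bsub>M\<^esub> (q1 \<oplus>\<^bsub>M\<^esub> q2)"
      using xy(1,2) by (simp del: M2_simps add: MR.a_ac)
    thus "x \<oplus>\<^bsub>M\<^esub> y \<in> K" unfolding K_def using xy left_ideal_closed(3)[OF li] Qadd by blast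
  next
    fix r x assume r: "r \<in> carrier M" and "x \<in> K"
    then obtain x1 q1 where xy: "x = x1 \<oplus>\<^bsub>M\<^esub> q1" "x1 \<in> I" "q1 \<in> Q" by (auto simp: K_def)
    have "x1 \<in> carrier M" "q1 \<in> carrier M" using xy Ic Qc by auto
    hence "r \<otimes>\<^bsub>M\<^esub> x = r \<otimes>\<^bsub>M\<^esub> x1 \<oplus>\<^bsub>M\<^esub> r \<otimes>\<^bsub>M\<^esub> q1"
      using xy(1) r by (simp del: M2_simps add: MR.r_distr)
    moreover have "r \<otimes>\<^bsub>M\<^esub> q1 \<in> Q" using Q_left[OF r] xy(3) by (simp add: Q_def)
    moreover have "r \<otimes>\<^bsub>M\<^esub> x1 \<in> I" using left_ideal_closed(5)[OF li r xy(2)] .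
    ultimately show "r \<otimes>\<^bsub>M\<^esub> x \<in> K" unfolding K_def by blast
  qed
  have IK: "I \<subseteq> K"
  proof
    fix x assume "x \<in> I"
    hence "x = x \<oplus>\<^bsub>M\<^esub> \<zero>\<^bsub>M\<^esub>" using Ic by auto
    thus "x \<in> K" unfolding K_def using \<open>x \<in> I\<close> Q0 by blast
  qed
  have "A \<in> K"
  proof -
    have "A = \<zero>\<^bsub>M\<^esub> \<oplus>\<^bsub>M\<^esub> A" using A by simp
    moreover have "A \<in> Q" using A by (simp add: Q_def)
    ultimately show ?thesis unfolding K_def using left_ideal_closed(2)[OF li] by blast
  qed
  hence "K \<noteq> I" using AI by blast
  hence "K = carrier M" using I liK IK by (auto simp: maximal_left_ideal_def)
  hence "\<one>\<^bsub>M\<^esub> \<in> K" using MR.one_closed by simp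
  then obtain x q where xq: "\<one>\<^bsub>M\<^esub> = x \<oplus>\<^bsub>M\<^esub> q" "x \<in> I" "q \<in> Q" unfolding K_def by blast
  obtain x1 x2 x3 x4 where xx: "x = (x1,x2,x3,x4)" by (cases x rule: prod_cases4)
  obtain q1 q2 q3 q4 where qq: "q = (q1,q2,q3,q4)" by (cases q rule: prod_cases4)
  have xc: "x1 \<in> carrier R" "x2 \<in> carrier R" "x3 \<in> carrier R" "x4 \<in> carrier R" using xq Ic xx by auto
  have qJ: "q1 \<in> J" "q4 \<in> J" using xq qq by (auto simp: Q_def)
  have e: "x1 \<oplus> q1 = \<one>" "x4 \<oplus> q4 = \<one>" using xq(1) xx qq by auto
  have "x1 \<notin> J" using add_J_iff[OF xc(1) qJ(1)] e one_notin_J by simp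
  moreover have "x4 \<notin> J" using add_J_iff[OF xc(4) qJ(2)] e one_notin_J by simp
  ultimately show False using key[OF I _ xc] xq(2) xx by simp
qed

lemma jac_M2: "jacobson M = {A \<in> carrier M. e11 A \<in> J \<and> e22 A \<in> J}"
proof
  show "jacobson M \<subseteq> {A \<in> carrier M. e11 A \<in> J \<and> e22 A \<in> J}"
    using max1 max2 by (auto simp: jacobson_def)
  show "{A \<in> carrier M. e11 A \<in> J \<and> e22 A \<in> J} \<subseteq> jacobson M"
    using Q_sub by (auto simp: jacobson_def)
qed

lemma pow_diag:
  fixes n :: nat
  assumes A: "A \<in> carrier M"
  shows "0 < n \<Longrightarrow> (e11 (A [^]\<^bsub>M\<^esub> n) \<in> J \<longleftrightarrow> e11 A \<in> J) \<and> (e22 (A [^]\<^bsub>M\<^esub> n) \<in> J \<longleftrightarrow> e22 A \<in> J)"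
proof (induction n)
  case 0 then show ?case by simp
next
  case (Suc n)
  interpret MR: ring M by (rule M2_ring)
  show ?case
  proof (cases "n = 0")
    case True then show ?thesis using A by (cases A rule: prod_cases4) simp
  next
    case False
    with Suc.IH have IH: "(e11 (A [^]\<^bsub>M\<^esub> n) \<in> J \<longleftrightarrow> e11 A \<in> J)"
      "(e22 (A [^]\<^bsub>M\<^esub> n) \<in> J \<longleftrightarrow> e22 A \<in> J)" by auto
    have P: "A [^]\<^bsub>M\<^esub> n \<in> carrier M" by (rule MR.nat_pow_closed[OF A])
    obtain p1 p2 p3 p4 where pp: "A [^]\<^bsub>M\<^esub> n = (p1,p2,p3,p4)" by (cases "A [^]\<^bsub>M\<^esub> n" rule: prod_cases4)
    obtain a b c d where aa: "A = (a,b,c,d)" by (cases A rule: prod_cases4)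
    have pc: "p1 \<in> carrier R" "p2 \<in> carrier R" "p3 \<in> carrier R" "p4 \<in> carrier R" using P pp by auto
    have ac: "a \<in> carrier R" "b \<in> carrier R" "c \<in> carrier R" "d \<in> carrier R" using A aa by auto
    have S: "A [^]\<^bsub>M\<^esub> Suc n = (p1,p2,p3,p4) \<otimes>\<^bsub>M\<^esub> (a,b,c,d)"
      using pp aa by (simp add: MR.nat_pow_Suc)
    have j1: "s [^] (2::nat) \<otimes> p2 \<otimes> c \<in> J" using pc ac by (intro tJ3)
    have j2: "s [^] (2::nat) \<otimes> p3 \<otimes> b \<in> J" using pc ac by (intro tJ3)
    have pm: "\<And>p x. p \<in> carrier R \<Longrightarrow> x \<in> carrier R \<Longrightarrow> (p \<in> J \<longleftrightarrow> x \<in> J) \<Longrightarrow> (p \<otimes> x \<in> J \<longleftrightarrow> x \<in> J)"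
      using J_left prod_notJ by blast
    have "e11 (A [^]\<^bsub>M\<^esub> Suc n) = p1 \<otimes> a \<oplus> s [^] (2::nat) \<otimes> p2 \<otimes> c" using S by simp
    hence r1: "e11 (A [^]\<^bsub>M\<^esub> Suc n) \<in> J \<longleftrightarrow> e11 A \<in> J"
      using add_J_iff[OF _ j1, of "p1 \<otimes> a"] pm[of p1 a] IH(1) pp aa pc ac by simp
    have "e22 (A [^]\<^bsub>M\<^esub> Suc n) = p4 \<otimes> d \<oplus> s [^] (2::nat) \<otimes> p3 \<otimes> b" using S pc ac by (simp add: a_comm)
    hence r2: "e22 (A [^]\<^bsub>M\<^esub> Suc n) \<in> J \<longleftrightarrow> e22 A \<in> J"
      using add_J_iff[OF _ j2, of "p4 \<otimes> d"] pm[of p4 d] IH(2) pp aa pc ac by simp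
    show ?thesis using r1 r2 by simp
  qed
qed

end

theorem lemma2p6:
  fixes R :: "('a, 'b) ring_scheme" and s :: 'a and A :: "'a * 'a * 'a * 'a"
  assumes "local_ring R"
    and "central R s"
    and "s \<in> jacobson R"
    and "A \<in> carrier (M2 R s)"
  shows "(\<exists>n::nat. n > 0 \<and> A [^]\<^bsub>M2 R s\<^esub> n \<in> jacobson (M2 R s))
         \<longleftrightarrow> A \<in> jacobson (M2 R s)"
proof -
  have rR: "ring R" using assms(1) by (simp add: local_ring_def)
  interpret lr R s
    by (intro lr.intro m2.intro lr_axioms.intro rR m2_axioms.intro assms(1-3))
  interpret MR: ring "M2 R s" by (rule M2_ring)
  show ?thesis
  proof
    assume "\<exists>n::nat. n > 0 \<and> A [^]\<^bsub>M2 R s\<^esub> n \<in> jacobson (M2 R s)"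
    then obtain n :: nat where n: "n > 0" "A [^]\<^bsub>M2 R s\<^esub> n \<in> jacobson (M2 R s)" by blast
    thus "A \<in> jacobson (M2 R s)" using pow_diag[OF assms(4) n(1)] assms(4) by (simp add: jac_M2)
  next
    assume AJ: "A \<in> jacobson (M2 R s)"
    have "A [^]\<^bsub>M2 R s\<^esub> (1::nat) = A" using MR.nat_pow_eone[OF assms(4)] .
    thus "\<exists>n::nat. n > 0 \<and> A [^]\<^bsub>M2 R s\<^esub> n \<in> jacobson (M2 R s)"
      using AJ by (intro exI[of _ "1::nat"]) (simp only:, simp)
  qed
qed

end
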